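(* Suppose the payoff is normally distributed, $\tilde v\sim N(\mu_v,\sigma_v^2)$ with $\sigma_v>0$, and let $\lambda,\sigma_Z,T>0$. Consider the problem of maximizing $$J=\frac12\Big\{\mathbb E\big[\mathbb E[\tilde v|\tilde s]^2\big]+\sigma_Z^2T-W_2^2(F_s,G)\Big\}-\lambda I(\tilde s;\tilde v)$$ over signal structures $(p(\cdot|\cdot),q(\cdot))$, i.e. a marginal density $q$ of the signal $\tilde s$ and conditional densities $p(v|s)$ with $\int p(v|s)\,dv=1$ for all $s$ and $\int p(v|s)q(s)\,ds=p(v)$ for all $v$, where $p$ is the $N(\mu_v,\sigma_v^2)$ density. Then, among all such distributions for which $\frac{d}{ds}\mathbb E[\tilde v|\tilde s=s]\neq0$ for almost all $s$, an optimal $(p(\cdot|\cdot),q(\cdot))$ is normal (i.e. $(\tilde v,\tilde s)$ is jointly normal). Moreover, this optimal signal structure can be implemented by a signal $\tilde s=\tilde v+\tilde\epsilon$ with $\tilde\epsilon\sim N(0,\sigma_\epsilon^2)$ independent of $\tilde v$.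
   Context: $F_s$ is the distribution function of $\mathbb E[\tilde v|\tilde s]$, $G$ is the CDF of $N(0,\sigma_Z^2T)$ (the law of terminal noise trades $Z_T=\sigma_ZB_T$), and $W_2$ is the Wasserstein-2 distance. $I(\tilde s;\tilde v)=\mathbb H(p)-\int q(s)\mathbb H(p(\cdot|s))\,ds$ is the mutual information, with $\mathbb H$ the (differential) entropy. $J$ is the informed trader's unconditional expected profit in the Kyle–Back equilibrium minus the information acquisition cost. *)

theory Defs
  imports "HOL-Probability.Probability"
begin

text \<open>A signal structure: pc v s = p(v|s) (conditional density of the payoff given the
signal), q = marginal density of the signal; the payoff density is N(mu, sigma^2).\<close>

definition signal_structure ::
  "real \<Rightarrow> real \<Rightarrow> (real \<Rightarrow> real \<Rightarrow> real) \<Rightarrow> (real \<Rightarrow> real) \<Rightarrow> bool" where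
  "signal_structure \<mu> \<sigma> pc q \<longleftrightarrow>
     q \<in> borel_measurable lborel \<and> (\<forall>s. 0 \<le> q s) \<and>
     integrable lborel q \<and> (\<integral>s. q s \<partial>lborel) = 1 \<and>
     (\<lambda>(v, s). pc v s) \<in> borel_measurable (lborel \<Otimes>\<^sub>M lborel) \<and>
     (\<forall>v s. 0 \<le> pc v s) \<and>
     (\<forall>s. integrable lborel (\<lambda>v. pc v s) \<and> (\<integral>v. pc v s \<partial>lborel) = 1) \<and>
     (\<forall>v. integrable lborel (\<lambda>s. pc v s * q s) \<and>
          (\<integral>s. pc v s * q s \<partial>lborel) = normal_density \<mu> \<sigma> v)"

definition cond_mean :: "(real \<Rightarrow> real \<Rightarrow> real) \<Rightarrow> real \<Rightarrow> real" where
  "cond_mean pc s = (\<integral>v. v * pc v s \<partial>lborel)"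

definition diff_entropy :: "(real \<Rightarrow> real) \<Rightarrow> real" where
  "diff_entropy f = - (\<integral>x. f x * ln (f x) \<partial>lborel)"

definition mutual_info ::
  "real \<Rightarrow> real \<Rightarrow> (real \<Rightarrow> real \<Rightarrow> real) \<Rightarrow> (real \<Rightarrow> real) \<Rightarrow> real" where
  "mutual_info \<mu> \<sigma> pc q =
     diff_entropy (normal_density \<mu> \<sigma>) - (\<integral>s. q s * diff_entropy (\<lambda>v. pc v s) \<partial>lborel)"

definition W2sq :: "real measure \<Rightarrow> real measure \<Rightarrow> ennreal" where
  "W2sq M N = (INF \<pi> \<in> {\<pi>. prob_space \<pi> \<and> sets \<pi> = sets (lborel \<Otimes>\<^sub>M lborel) \<and>
                         distr \<pi> lborel fst = M \<and> distr \<pi> lborel snd = N}.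
                 \<integral>\<^sup>+ xy. ennreal ((fst xy - snd xy)\<^sup>2) \<partial>\<pi>)"

definition law_cond_mean :: "(real \<Rightarrow> real \<Rightarrow> real) \<Rightarrow> (real \<Rightarrow> real) \<Rightarrow> real measure" where
  "law_cond_mean pc q = distr (density lborel q) lborel (cond_mean pc)"

definition noise_law :: "real \<Rightarrow> real \<Rightarrow> real measure" where
  "noise_law \<sigma>Z T = density lborel (normal_density 0 (\<sigma>Z * sqrt T))"

definition J_well_defined ::
  "(real \<Rightarrow> real \<Rightarrow> real) \<Rightarrow> (real \<Rightarrow> real) \<Rightarrow> bool" where
  "J_well_defined pc q \<longleftrightarrow>
     (AE s in density lborel q.
        integrable lborel (\<lambda>v. v * pc v s) \<and>
        integrable lborel (\<lambda>v. pc v s * ln (pc v s))) \<and>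
     integrable lborel (\<lambda>s. q s * diff_entropy (\<lambda>v. pc v s)) \<and>
     integrable lborel (\<lambda>s. (cond_mean pc s)\<^sup>2 * q s)"

definition J_obj ::
  "real \<Rightarrow> real \<Rightarrow> real \<Rightarrow> real \<Rightarrow> real \<Rightarrow>
   (real \<Rightarrow> real \<Rightarrow> real) \<Rightarrow> (real \<Rightarrow> real) \<Rightarrow> real" where
  "J_obj lam \<sigma>Z T \<mu> \<sigma> pc q =
     1/2 * ((\<integral>s. (cond_mean pc s)\<^sup>2 * q s \<partial>lborel) + \<sigma>Z\<^sup>2 * T
            - enn2real (W2sq (law_cond_mean pc q) (noise_law \<sigma>Z T)))
     - lam * mutual_info \<mu> \<sigma> pc q"

definition admissible ::
  "real \<Rightarrow> real \<Rightarrow> (real \<Rightarrow> real \<Rightarrow> real) \<Rightarrow> (real \<Rightarrow> real) \<Rightarrow> bool" where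
  "admissible \<mu> \<sigma> pc q \<longleftrightarrow>
     signal_structure \<mu> \<sigma> pc q \<and> J_well_defined pc q \<and>
     (AE s in density lborel q.
        cond_mean pc differentiable (at s) \<and> deriv (cond_mean pc) s \<noteq> 0)"

end

theory Submission
  imports Defs
begin



lemma normal_x2:
  assumes "0 < s"
  shows "integrable lborel (\<lambda>x. normal_density m s x * x\<^sup>2)"
    "(\<integral>x. normal_density m s x * x\<^sup>2 \<partial>lborel) = s\<^sup>2 + m\<^sup>2"
proof -
  have e: "\<And>x. normal_density m s x * x\<^sup>2 = normal_density m s x * (x - m)^2 + 2 * m * (normal_density m s x * x) - m\<^sup>2 * normal_density m s x"
    by (simp add: power2_eq_square algebra_simps)
  have i1: "integrable lborel (\<lambda>x. normal_density m s x * (x - m)^2)"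
    using integrable_normal_moment[OF assms] by simp
  have i2: "integrable lborel (\<lambda>x. normal_density m s x * x)"
    using integrable_normal_moment_nz_1[OF assms] .
  show "integrable lborel (\<lambda>x. normal_density m s x * x\<^sup>2)"
    unfolding e
    by (rule Bochner_Integration.integrable_diff[OF Bochner_Integration.integrable_add[OF i1 integrable_mult_right[OF i2]] integrable_mult_right[OF integrable_normal_density[OF assms]]])
  have v: "(\<integral>x. normal_density m s x * (x - m)^2 \<partial>lborel) = s\<^sup>2"
    using integral_normal_moment_even[OF assms, of m 1] by (simp add: power2_eq_square)
  show "(\<integral>x. normal_density m s x * x\<^sup>2 \<partial>lborel) = s\<^sup>2 + m\<^sup>2"
    unfolding e using i1 i2 integrable_normal_density[OF assms] v integral_normal_moment_nz_1[OF assms, of m]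
      integral_normal_density[OF assms]
    by (simp add: power2_eq_square)
qed

lemma normal_ln:
  assumes "0 < s"
  shows "ln (normal_density m s x) = - ln (2 * pi * s\<^sup>2) / 2 - (x - m)\<^sup>2 / (2 * s\<^sup>2)"
  using assms by (simp add: normal_density_def ln_mult ln_div ln_sqrt field_simps)

lemma normal_entropy:
  assumes "0 < s"
  shows "integrable lborel (\<lambda>x. normal_density m s x * ln (normal_density m s x))"
    "diff_entropy (normal_density m s) = (ln (2 * pi * s\<^sup>2) + 1) / 2"
proof -
  have e: "\<And>x. normal_density m s x * ln (normal_density m s x) =
     (- ln (2 * pi * s\<^sup>2) / 2) * normal_density m s x - (1 / (2 * s\<^sup>2)) * (normal_density m s x * (x - m)^2)"
    using assms by (simp add: normal_ln field_simps)
  have i1: "integrable lborel (\<lambda>x. normal_density m s x * (x - m)^2)"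
    using integrable_normal_moment[OF assms] by simp
  have v: "(\<integral>x. normal_density m s x * (x - m)^2 \<partial>lborel) = s\<^sup>2"
    using integral_normal_moment_even[OF assms, of m 1] by (simp add: power2_eq_square)
  show "integrable lborel (\<lambda>x. normal_density m s x * ln (normal_density m s x))"
    unfolding e using i1 integrable_normal_density[OF assms] by auto
  show "diff_entropy (normal_density m s) = (ln (2 * pi * s\<^sup>2) + 1) / 2"
    unfolding diff_entropy_def e using i1 integrable_normal_density[OF assms] v integral_normal_density[OF assms] assms
    by (simp add: field_simps)
qed



lemma gibbs_pointwise:
  fixes f g :: real
  assumes "0 \<le> f" "0 < g"
  shows "f * ln g + f - g \<le> f * ln f"
proof (cases "f = 0")
  case True then show ?thesis using assms by simp
next
  case False
  then have fp: "0 < f" using assms by simp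
  have "ln (g / f) \<le> g / f - 1" using fp assms by (intro ln_le_minus_one) simp
  then have "ln g - ln f \<le> g / f - 1" using fp assms by (simp add: ln_div)
  then have "f * (ln g - ln f) \<le> f * (g / f - 1)" using fp by (intro mult_left_mono) auto
  then show ?thesis using fp by (simp add: algebra_simps)
qed

lemma gibbs:
  fixes f :: "real \<Rightarrow> real"
  assumes fi: "integrable lborel f" and fnn: "\<And>x. 0 \<le> f x" and f1: "(\<integral>x. f x \<partial>lborel) = 1"
    and fl: "integrable lborel (\<lambda>x. f x * ln (f x))"
    and fv: "integrable lborel (\<lambda>x. (x - m)\<^sup>2 * f x)" and c: "0 < c"
  shows "- (\<integral>x. f x * ln (f x) \<partial>lborel) \<le> ln (2 * pi * c) / 2 + (\<integral>x. (x - m)\<^sup>2 * f x \<partial>lborel) / (2 * c)"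
proof -
  let ?g = "normal_density m (sqrt c)"
  have sc: "0 < sqrt c" using c by simp
  have lg: "\<And>x. f x * ln (?g x) = (- ln (2 * pi * c) / 2) * f x - (1 / (2 * c)) * ((x - m)\<^sup>2 * f x)"
    using c sc by (simp add: normal_ln[OF sc] field_simps)
  have ilg: "integrable lborel (\<lambda>x. f x * ln (?g x))"
    unfolding lg using fi fv by (intro Bochner_Integration.integrable_diff integrable_mult_right)
  have ig: "integrable lborel ?g" using integrable_normal_density[OF sc] .
  have "(\<integral>x. f x * ln (?g x) + f x - ?g x \<partial>lborel) \<le> (\<integral>x. f x * ln (f x) \<partial>lborel)"
    using ilg fi ig fl
    by (intro integral_mono Bochner_Integration.integrable_diff Bochner_Integration.integrable_add gibbs_pointwise)
       (auto simp: fnn normal_density_pos[OF sc])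
  moreover have "(\<integral>x. f x * ln (?g x) + f x - ?g x \<partial>lborel) = (\<integral>x. f x * ln (?g x) \<partial>lborel)"
    using ilg fi ig f1 integral_normal_density[OF sc] by simp
  moreover have "(\<integral>x. f x * ln (?g x) \<partial>lborel) = - ln (2 * pi * c) / 2 - (\<integral>x. (x - m)\<^sup>2 * f x \<partial>lborel) / (2 * c)"
    unfolding lg using fi fv f1 by simp
  ultimately show ?thesis by simp
qed



lemma coupling_lower:
  fixes P1 P2 :: "real measure" and \<pi> :: "(real \<times> real) measure" and g1 g2 :: "real \<Rightarrow> real"
  assumes sp: "sets \<pi> = sets (lborel \<Otimes>\<^sub>M lborel)" and d1: "distr \<pi> lborel fst = P1" and d2: "distr \<pi> lborel snd = P2"
    and g1m[measurable]: "g1 \<in> borel_measurable lborel" and g2m[measurable]: "g2 \<in> borel_measurable lborel"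
    and ig1: "integrable P1 g1" and ig2: "integrable P2 g2"
    and ix: "integrable P1 (\<lambda>x. x\<^sup>2)" and iy: "integrable P2 (\<lambda>x. x\<^sup>2)"
    and le: "\<And>x y. g1 x + g2 y \<le> (x - y)\<^sup>2"
  shows "ennreal ((\<integral>x. g1 x \<partial>P1) + (\<integral>y. g2 y \<partial>P2)) \<le> (\<integral>\<^sup>+ xy. ennreal ((fst xy - snd xy)\<^sup>2) \<partial>\<pi>)"
proof -
  have mc: "measurable \<pi> lborel = measurable (lborel \<Otimes>\<^sub>M lborel) lborel"
    by (rule measurable_cong_sets[OF sp refl])
  have mcb: "measurable \<pi> borel = measurable (lborel \<Otimes>\<^sub>M lborel) borel"
    by (rule measurable_cong_sets[OF sp refl])
  have fm: "fst \<in> measurable \<pi> lborel" unfolding mc by simp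
  have sm: "snd \<in> measurable \<pi> lborel" unfolding mc by simp
  have iF: "integrable \<pi> (\<lambda>p. g (fst p))" if "g \<in> borel_measurable lborel" "integrable P1 g" for g :: "real \<Rightarrow> real"
    using integrable_distr_eq[OF fm that(1)] d1 that(2) by simp
  have iS: "integrable \<pi> (\<lambda>p. g (snd p))" if "g \<in> borel_measurable lborel" "integrable P2 g" for g :: "real \<Rightarrow> real"
    using integrable_distr_eq[OF sm that(1)] d2 that(2) by simp
  have IF: "(\<integral>p. g (fst p) \<partial>\<pi>) = (\<integral>x. g x \<partial>P1)" if "g \<in> borel_measurable lborel" for g :: "real \<Rightarrow> real"
    using integral_distr[OF fm that] unfolding d1 by simp
  have IS: "(\<integral>p. g (snd p) \<partial>\<pi>) = (\<integral>x. g x \<partial>P2)" if "g \<in> borel_measurable lborel" for g :: "real \<Rightarrow> real"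
    using integral_distr[OF sm that] unfolding d2 by simp
  have i1: "integrable \<pi> (\<lambda>p. g1 (fst p))" by (rule iF[OF g1m ig1])
  have i2: "integrable \<pi> (\<lambda>p. g2 (snd p))" by (rule iS[OF g2m ig2])
  have i3: "integrable \<pi> (\<lambda>p. (fst p)\<^sup>2)" by (rule iF[OF _ ix]) simp
  have i4: "integrable \<pi> (\<lambda>p. (snd p)\<^sup>2)" by (rule iS[OF _ iy]) simp
  have I: "integrable \<pi> (\<lambda>p. (fst p - snd p)\<^sup>2)"
  proof (rule Bochner_Integration.integrable_bound[OF Bochner_Integration.integrable_add[OF integrable_mult_right[OF i3, of 2] integrable_mult_right[OF i4, of 2]]])
    show "(\<lambda>p. (fst p - snd p)\<^sup>2) \<in> borel_measurable \<pi>" unfolding mcb by measurable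
    show "AE p in \<pi>. norm ((fst p - snd p)\<^sup>2) \<le> norm (2 * (fst p)\<^sup>2 + 2 * (snd p)\<^sup>2)"
    proof (intro AE_I2)
      fix p :: "real \<times> real"
      have "(fst p - snd p)\<^sup>2 \<le> 2 * (fst p)\<^sup>2 + 2 * (snd p)\<^sup>2"
        using sum_squares_bound[of "fst p" "- snd p"] by (simp add: power2_eq_square algebra_simps)
      then show "norm ((fst p - snd p)\<^sup>2) \<le> norm (2 * (fst p)\<^sup>2 + 2 * (snd p)\<^sup>2)" by simp
    qed
  qed
  have "(\<integral>x. g1 x \<partial>P1) + (\<integral>y. g2 y \<partial>P2) = (\<integral>p. g1 (fst p) + g2 (snd p) \<partial>\<pi>)"
    using i1 i2 IF[OF g1m] IS[OF g2m] by simp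
  also have "\<dots> \<le> (\<integral>p. (fst p - snd p)\<^sup>2 \<partial>\<pi>)"
    using Bochner_Integration.integrable_add[OF i1 i2] I by (rule integral_mono) (rule le)
  finally have "ennreal ((\<integral>x. g1 x \<partial>P1) + (\<integral>y. g2 y \<partial>P2)) \<le> ennreal (\<integral>p. (fst p - snd p)\<^sup>2 \<partial>\<pi>)"
    by (rule ennreal_leI)
  also have "\<dots> = (\<integral>\<^sup>+ xy. ennreal ((fst xy - snd xy)\<^sup>2) \<partial>\<pi>)"
    using I by (rule nn_integral_eq_integral[symmetric]) simp
  finally show ?thesis .
qed

lemma distr_pair_snd':
  assumes "prob_space N" "prob_space M"
  shows "distr (N \<Otimes>\<^sub>M M) M snd = M"
proof (intro measure_eqI)
  interpret N: prob_space N by fact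
  interpret M: prob_space M by fact
  interpret P: pair_sigma_finite N M ..
  fix A assume A: "A \<in> sets (distr (N \<Otimes>\<^sub>M M) M snd)"
  from A have "emeasure (distr (N \<Otimes>\<^sub>M M) M snd) A = emeasure (N \<Otimes>\<^sub>M M) (space N \<times> A)"
    by (auto simp add: emeasure_distr space_pair_measure dest: sets.sets_into_space intro!: arg_cong2[where f=emeasure])
  with A show "emeasure (distr (N \<Otimes>\<^sub>M M) M snd) A = emeasure M A"
    using M.emeasure_pair_measure_Times[of "space N" N A] N.emeasure_space_1 by simp
qed simp

lemma W2_finite:
  fixes P1 P2 :: "real measure"
  assumes p1: "prob_space P1" and p2: "prob_space P2" and s1: "sets P1 = sets lborel" and s2: "sets P2 = sets lborel"
    and ix: "integrable P1 (\<lambda>x. x\<^sup>2)" and iy: "integrable P2 (\<lambda>x. x\<^sup>2)"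
  shows "W2sq P1 P2 < \<infinity>"
proof -
  let ?\<pi> = "P1 \<Otimes>\<^sub>M P2"
  have sp: "sets ?\<pi> = sets (lborel \<Otimes>\<^sub>M lborel)" by (rule sets_pair_measure_cong[OF s1 s2])
  have d1: "distr ?\<pi> lborel fst = P1"
  proof -
    have "distr ?\<pi> lborel fst = distr ?\<pi> P1 fst" by (rule distr_cong) (auto simp: s1)
    also have "\<dots> = P1" using prob_space.distr_pair_fst[OF p2] .
    finally show ?thesis .
  qed
  have d2: "distr ?\<pi> lborel snd = P2"
  proof -
    have "distr ?\<pi> lborel snd = distr ?\<pi> P2 snd" by (rule distr_cong) (auto simp: s2)
    also have "\<dots> = P2" using distr_pair_snd'[OF p1 p2] .
    finally show ?thesis .
  qed
  have mc: "measurable ?\<pi> lborel = measurable (lborel \<Otimes>\<^sub>M lborel) lborel"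
    by (rule measurable_cong_sets[OF sp refl])
  have mcb: "measurable ?\<pi> borel = measurable (lborel \<Otimes>\<^sub>M lborel) borel"
    by (rule measurable_cong_sets[OF sp refl])
  have fm: "fst \<in> measurable ?\<pi> lborel" unfolding mc by simp
  have sm: "snd \<in> measurable ?\<pi> lborel" unfolding mc by simp
  have i3: "integrable ?\<pi> (\<lambda>p. (fst p)\<^sup>2)" using integrable_distr_eq[OF fm, of "\<lambda>x. x\<^sup>2"] d1 ix by simp
  have i4: "integrable ?\<pi> (\<lambda>p. (snd p)\<^sup>2)" using integrable_distr_eq[OF sm, of "\<lambda>x. x\<^sup>2"] d2 iy by simp
  have I: "integrable ?\<pi> (\<lambda>p. (fst p - snd p)\<^sup>2)"
  proof (rule Bochner_Integration.integrable_bound[OF Bochner_Integration.integrable_add[OF integrable_mult_right[OF i3, of 2] integrable_mult_right[OF i4, of 2]]])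
    show "(\<lambda>p. (fst p - snd p)\<^sup>2) \<in> borel_measurable ?\<pi>" unfolding mcb by measurable
    show "AE p in ?\<pi>. norm ((fst p - snd p)\<^sup>2) \<le> norm (2 * (fst p)\<^sup>2 + 2 * (snd p)\<^sup>2)"
    proof (intro AE_I2)
      fix p :: "real \<times> real"
      have "(fst p - snd p)\<^sup>2 \<le> 2 * (fst p)\<^sup>2 + 2 * (snd p)\<^sup>2"
        using sum_squares_bound[of "fst p" "- snd p"] by (simp add: power2_eq_square algebra_simps)
      then show "norm ((fst p - snd p)\<^sup>2) \<le> norm (2 * (fst p)\<^sup>2 + 2 * (snd p)\<^sup>2)" by simp
    qed
  qed
  have "W2sq P1 P2 \<le> (\<integral>\<^sup>+ xy. ennreal ((fst xy - snd xy)\<^sup>2) \<partial>?\<pi>)"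
    unfolding W2sq_def
    by (rule INF_lower) (use prob_space_pair[OF p1 p2] sp d1 d2 in simp)
  also have "\<dots> = ennreal (\<integral>p. (fst p - snd p)\<^sup>2 \<partial>?\<pi>)"
    using I by (rule nn_integral_eq_integral) simp
  also have "\<dots> < \<infinity>" by simp
  finally show ?thesis .
qed



lemma noise_facts:
  assumes a: "0 < a"
  shows "prob_space (density lborel (normal_density 0 a))"
    "sets (density lborel (normal_density 0 a)) = sets lborel"
    "integrable (density lborel (normal_density 0 a)) (\<lambda>y. y)"
    "(\<integral>y. y \<partial>density lborel (normal_density 0 a)) = 0"
    "integrable (density lborel (normal_density 0 a)) (\<lambda>y. y\<^sup>2)"
    "(\<integral>y. y\<^sup>2 \<partial>density lborel (normal_density 0 a)) = a\<^sup>2"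
proof -
  show "prob_space (density lborel (normal_density 0 a))" by (rule prob_space_normal_density[OF a])
  show "sets (density lborel (normal_density 0 a)) = sets lborel" by simp
  show "integrable (density lborel (normal_density 0 a)) (\<lambda>y. y)"
    by (subst integrable_density) (simp_all add: integrable_normal_moment_nz_1[OF a])
  show "(\<integral>y. y \<partial>density lborel (normal_density 0 a)) = 0"
    by (subst integral_density) (simp_all add: integral_normal_moment_nz_1[OF a])
  show "integrable (density lborel (normal_density 0 a)) (\<lambda>y. y\<^sup>2)"
    by (subst integrable_density) (simp_all add: normal_x2(1)[OF a])
  show "(\<integral>y. y\<^sup>2 \<partial>density lborel (normal_density 0 a)) = a\<^sup>2"
    by (subst integral_density) (simp_all add: normal_x2(2)[OF a])
qed

lemma lin_aux:
  fixes M A X Y W B L K :: real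
  assumes "M + A - X - Y \<le> W" "A = B" "L \<le> K" shows "1/2*(M + B - W) - K \<le> 1/2*(X + Y) - L"
  using assms by argo

lemma quad_moments:
  fixes P :: "real measure"
  assumes P: "prob_space P" and i1: "integrable P (\<lambda>x. x)" and i2: "integrable P (\<lambda>x. x\<^sup>2)"
  shows "integrable P (\<lambda>x. A * x\<^sup>2 + B * x + C)"
    "(\<integral>x. A * x\<^sup>2 + B * x + C \<partial>P) = A * (\<integral>x. x\<^sup>2 \<partial>P) + B * (\<integral>x. x \<partial>P) + C"
proof -
  interpret prob_space P by fact
  show "integrable P (\<lambda>x. A * x\<^sup>2 + B * x + C)"
    using i1 i2 by (intro Bochner_Integration.integrable_add integrable_mult_right integrable_const) auto
  show "(\<integral>x. A * x\<^sup>2 + B * x + C \<partial>P) = A * (\<integral>x. x\<^sup>2 \<partial>P) + B * (\<integral>x. x \<partial>P) + C"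
    using i1 i2 prob_space by (simp add: Bochner_Integration.integral_add Bochner_Integration.integrable_add)
qed

context
  fixes \<mu> \<sigma> :: real and pc :: "real \<Rightarrow> real \<Rightarrow> real" and q :: "real \<Rightarrow> real"
  assumes ss: "signal_structure \<mu> \<sigma> pc q" and sp: "0 < \<sigma>"
    and im2: "integrable lborel (\<lambda>s. (cond_mean pc s)\<^sup>2 * q s)"
begin

lemma pcm[measurable]: "(\<lambda>(v, s). pc v s) \<in> borel_measurable (lborel \<Otimes>\<^sub>M lborel)"
  using ss unfolding signal_structure_def by blast

lemma qm[measurable]: "q \<in> borel_measurable lborel"
  using ss unfolding signal_structure_def by blast

lemma qnn: "0 \<le> q s" using ss unfolding signal_structure_def by blast
lemma pcnn: "0 \<le> pc v s" using ss unfolding signal_structure_def by blast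
lemma pci: "integrable lborel (\<lambda>v. pc v s)" using ss unfolding signal_structure_def by blast
lemma pc1: "(\<integral>v. pc v s \<partial>lborel) = 1" using ss unfolding signal_structure_def by blast
lemma pqi: "integrable lborel (\<lambda>s. pc v s * q s)" using ss unfolding signal_structure_def by blast
lemma pqN: "(\<integral>s. pc v s * q s \<partial>lborel) = normal_density \<mu> \<sigma> v" using ss unfolding signal_structure_def by blast

lemma pcm_swap[measurable]: "(\<lambda>(s, v). pc v s) \<in> borel_measurable (lborel \<Otimes>\<^sub>M lborel)"
  using measurable_pair_swap[OF pcm] by simp

lemma mm[measurable]: "cond_mean pc \<in> borel_measurable lborel"
proof -
  have "(\<lambda>(s, v). v * pc v s) \<in> borel_measurable (lborel \<Otimes>\<^sub>M lborel)" by measurable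
  then show ?thesis unfolding cond_mean_def
    by (rule lborel.borel_measurable_lebesgue_integral)
qed


lemma joint_v:
  assumes hm[measurable]: "h \<in> borel_measurable lborel"
    and hi: "integrable lborel (\<lambda>v. normal_density \<mu> \<sigma> v * \<bar>h v\<bar>)"
  shows "integrable (lborel \<Otimes>\<^sub>M lborel) (\<lambda>(v, s). pc v s * q s * h v)"
    "(\<integral>(v, s). pc v s * q s * h v \<partial>(lborel \<Otimes>\<^sub>M lborel)) = (\<integral>v. normal_density \<mu> \<sigma> v * h v \<partial>lborel)"
proof -
  have e: "\<And>v. (\<integral>s. \<bar>pc v s * q s * h v\<bar> \<partial>lborel) = normal_density \<mu> \<sigma> v * \<bar>h v\<bar>"
  proof -
    fix v
    have "(\<integral>s. \<bar>pc v s * q s * h v\<bar> \<partial>lborel) = (\<integral>s. pc v s * q s * \<bar>h v\<bar> \<partial>lborel)"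
      by (intro Bochner_Integration.integral_cong) (auto simp: abs_mult pcnn qnn)
    also have "\<dots> = normal_density \<mu> \<sigma> v * \<bar>h v\<bar>" by (simp add: pqN)
    finally show "(\<integral>s. \<bar>pc v s * q s * h v\<bar> \<partial>lborel) = normal_density \<mu> \<sigma> v * \<bar>h v\<bar>" .
  qed
  show I: "integrable (lborel \<Otimes>\<^sub>M lborel) (\<lambda>(v, s). pc v s * q s * h v)"
    by (rule lborel_pair.Fubini_integrable) (auto simp: e hi intro!: integrable_mult_left pqi)
  have "(\<integral>(v, s). pc v s * q s * h v \<partial>(lborel \<Otimes>\<^sub>M lborel)) = (\<integral>v. (\<integral>s. pc v s * q s * h v \<partial>lborel) \<partial>lborel)"
    using lborel_pair.integral_fst[OF I] by simp
  also have "\<dots> = (\<integral>v. normal_density \<mu> \<sigma> v * h v \<partial>lborel)"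
    by (simp add: pqN)
  finally show "(\<integral>(v, s). pc v s * q s * h v \<partial>(lborel \<Otimes>\<^sub>M lborel)) = (\<integral>v. normal_density \<mu> \<sigma> v * h v \<partial>lborel)" .
qed

lemma joint_s:
  assumes gm[measurable]: "g \<in> borel_measurable lborel"
    and gi: "integrable lborel (\<lambda>s. q s * \<bar>g s\<bar>)"
  shows "integrable (lborel \<Otimes>\<^sub>M lborel) (\<lambda>(v, s). pc v s * q s * g s)"
    "(\<integral>(v, s). pc v s * q s * g s \<partial>(lborel \<Otimes>\<^sub>M lborel)) = (\<integral>s. q s * g s \<partial>lborel)"
proof -
  have e: "\<And>s. (\<integral>v. \<bar>pc v s * q s * g s\<bar> \<partial>lborel) = q s * \<bar>g s\<bar>"
  proof -
    fix s
    have "(\<integral>v. \<bar>pc v s * q s * g s\<bar> \<partial>lborel) = (\<integral>v. pc v s * (q s * \<bar>g s\<bar>) \<partial>lborel)"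
      by (intro Bochner_Integration.integral_cong) (auto simp: abs_mult pcnn qnn)
    also have "\<dots> = q s * \<bar>g s\<bar>" by (simp add: pc1)
    finally show "(\<integral>v. \<bar>pc v s * q s * g s\<bar> \<partial>lborel) = q s * \<bar>g s\<bar>" .
  qed
  have I': "integrable (lborel \<Otimes>\<^sub>M lborel) (\<lambda>(s, v). pc v s * q s * g s)"
    by (rule lborel_pair.Fubini_integrable) (auto simp: e gi intro!: integrable_mult_left pci)
  show I: "integrable (lborel \<Otimes>\<^sub>M lborel) (\<lambda>(v, s). pc v s * q s * g s)"
    using I' lborel_pair.integrable_product_swap_iff[of "\<lambda>(v, s). pc v s * q s * g s"] by simp
  have "(\<integral>(v, s). pc v s * q s * g s \<partial>(lborel \<Otimes>\<^sub>M lborel)) = (\<integral>s. (\<integral>v. pc v s * q s * g s \<partial>lborel) \<partial>lborel)"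
    using lborel_pair.integral_snd[OF I] by simp
  also have "\<dots> = (\<integral>s. q s * g s \<partial>lborel)"
    by (simp add: pc1)
  finally show "(\<integral>(v, s). pc v s * q s * g s \<partial>(lborel \<Otimes>\<^sub>M lborel)) = (\<integral>s. q s * g s \<partial>lborel)" .
qed


lemma qm2i: "integrable lborel (\<lambda>s. q s * \<bar>(cond_mean pc s)\<^sup>2\<bar>)"
  using im2 by (simp add: mult.commute)

lemma jA: "integrable (lborel \<Otimes>\<^sub>M lborel) (\<lambda>(v, s). pc v s * q s * v\<^sup>2)"
    "(\<integral>(v, s). pc v s * q s * v\<^sup>2 \<partial>(lborel \<Otimes>\<^sub>M lborel)) = \<sigma>\<^sup>2 + \<mu>\<^sup>2"
  using joint_v[of "\<lambda>v. v\<^sup>2"] normal_x2[OF sp, of \<mu>] by auto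

lemma jC: "integrable (lborel \<Otimes>\<^sub>M lborel) (\<lambda>(v, s). pc v s * q s * v)"
    "(\<integral>(v, s). pc v s * q s * v \<partial>(lborel \<Otimes>\<^sub>M lborel)) = \<mu>"
proof -
  have "integrable lborel (\<lambda>v. normal_density \<mu> \<sigma> v * \<bar>v\<bar>)"
    using integrable_abs[OF integrable_normal_moment_nz_1[OF sp, of \<mu>]] by (simp add: abs_mult)
  then show "integrable (lborel \<Otimes>\<^sub>M lborel) (\<lambda>(v, s). pc v s * q s * v)"
    "(\<integral>(v, s). pc v s * q s * v \<partial>(lborel \<Otimes>\<^sub>M lborel)) = \<mu>"
    using joint_v[of "\<lambda>v. v"] integral_normal_moment_nz_1[OF sp, of \<mu>] by auto
qed

lemma jD: "integrable (lborel \<Otimes>\<^sub>M lborel) (\<lambda>(v, s). pc v s * q s * (cond_mean pc s)\<^sup>2)"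
    "(\<integral>(v, s). pc v s * q s * (cond_mean pc s)\<^sup>2 \<partial>(lborel \<Otimes>\<^sub>M lborel)) = (\<integral>s. q s * (cond_mean pc s)\<^sup>2 \<partial>lborel)"
  using joint_s[of "\<lambda>s. (cond_mean pc s)\<^sup>2", OF _ qm2i] by auto

lemma inner_m: "(\<integral>v. pc v s * q s * (v * c) \<partial>lborel) = q s * cond_mean pc s * c"
proof -
  have "(\<integral>v. pc v s * q s * (v * c) \<partial>lborel) = (\<integral>v. (q s * c) * (v * pc v s) \<partial>lborel)"
    by (intro Bochner_Integration.integral_cong) auto
  also have "\<dots> = q s * cond_mean pc s * c" unfolding cond_mean_def by simp
  finally show ?thesis .
qed

lemma mean_m: "(\<integral>s. q s * cond_mean pc s \<partial>lborel) = \<mu>"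
proof -
  have "(\<integral>s. q s * cond_mean pc s \<partial>lborel) = (\<integral>s. (\<integral>v. pc v s * q s * v \<partial>lborel) \<partial>lborel)"
    using inner_m[of _ 1] by simp
  also have "\<dots> = \<mu>" using lborel_pair.integral_snd[OF jC(1)] jC(2) by simp
  finally show ?thesis .
qed

lemma jE: "integrable (lborel \<Otimes>\<^sub>M lborel) (\<lambda>(v, s). pc v s * q s * (v * cond_mean pc s))"
    "(\<integral>(v, s). pc v s * q s * (v * cond_mean pc s) \<partial>(lborel \<Otimes>\<^sub>M lborel)) = (\<integral>s. q s * (cond_mean pc s)\<^sup>2 \<partial>lborel)"
proof -
  show I: "integrable (lborel \<Otimes>\<^sub>M lborel) (\<lambda>(v, s). pc v s * q s * (v * cond_mean pc s))"
  proof (rule Bochner_Integration.integrable_bound[OF Bochner_Integration.integrable_add[OF jA(1) jD(1)]])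
    show "(\<lambda>(v, s). pc v s * q s * (v * cond_mean pc s)) \<in> borel_measurable (lborel \<Otimes>\<^sub>M lborel)"
      by measurable
    show "AE x in lborel \<Otimes>\<^sub>M lborel. norm ((\<lambda>(v, s). pc v s * q s * (v * cond_mean pc s)) x)
         \<le> norm ((\<lambda>x. (\<lambda>(v, s). pc v s * q s * v\<^sup>2) x + (\<lambda>(v, s). pc v s * q s * (cond_mean pc s)\<^sup>2) x) x)"
    proof (intro AE_I2)
      fix x :: "real \<times> real"
      obtain v s where x: "x = (v, s)" by (cases x)
      have pq: "0 \<le> pc v s * q s" using pcnn qnn by simp
      have "\<bar>v * cond_mean pc s\<bar> \<le> v\<^sup>2 + (cond_mean pc s)\<^sup>2"
      proof -
        have "2 * \<bar>v\<bar> * \<bar>cond_mean pc s\<bar> \<le> \<bar>v\<bar>\<^sup>2 + \<bar>cond_mean pc s\<bar>\<^sup>2"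
          by (rule sum_squares_bound)
        moreover have "0 \<le> \<bar>v\<bar> * \<bar>cond_mean pc s\<bar>" by simp
        ultimately show ?thesis unfolding abs_mult power2_abs by linarith
      qed
      then have ineq: "pc v s * q s * \<bar>v * cond_mean pc s\<bar> \<le> pc v s * q s * (v\<^sup>2 + (cond_mean pc s)\<^sup>2)"
        using pq by (intro mult_left_mono) auto
      have e1: "\<bar>pc v s * q s * (v * cond_mean pc s)\<bar> = pc v s * q s * \<bar>v * cond_mean pc s\<bar>"
        using pq pcnn[of v s] qnn[of s] by (simp add: abs_mult)
      have e2: "\<bar>pc v s * q s * v\<^sup>2 + pc v s * q s * (cond_mean pc s)\<^sup>2\<bar> = pc v s * q s * (v\<^sup>2 + (cond_mean pc s)\<^sup>2)"
        using pq by (simp add: distrib_left)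
      show "norm ((\<lambda>(v, s). pc v s * q s * (v * cond_mean pc s)) x)
         \<le> norm ((\<lambda>x. (\<lambda>(v, s). pc v s * q s * v\<^sup>2) x + (\<lambda>(v, s). pc v s * q s * (cond_mean pc s)\<^sup>2) x) x)"
        unfolding x real_norm_def prod.case e1 e2 using ineq .
    qed
  qed
  have "(\<integral>(v, s). pc v s * q s * (v * cond_mean pc s) \<partial>(lborel \<Otimes>\<^sub>M lborel)) = (\<integral>s. (\<integral>v. pc v s * q s * (v * cond_mean pc s) \<partial>lborel) \<partial>lborel)"
    using lborel_pair.integral_snd[OF I] by simp
  also have "\<dots> = (\<integral>s. q s * (cond_mean pc s)\<^sup>2 \<partial>lborel)"
    unfolding inner_m by (simp add: power2_eq_square mult.assoc)
  finally show "(\<integral>(v, s). pc v s * q s * (v * cond_mean pc s) \<partial>(lborel \<Otimes>\<^sub>M lborel)) = (\<integral>s. q s * (cond_mean pc s)\<^sup>2 \<partial>lborel)" .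
qed


definition "Wv s = (\<integral>v. (v - cond_mean pc s)\<^sup>2 * pc v s \<partial>lborel)"
definition "Mm = (\<integral>s. q s * (cond_mean pc s)\<^sup>2 \<partial>lborel)"

lemma jV: "integrable (lborel \<Otimes>\<^sub>M lborel) (\<lambda>(v, s). pc v s * q s * (v - cond_mean pc s)\<^sup>2)"
    "(\<integral>(v, s). pc v s * q s * (v - cond_mean pc s)\<^sup>2 \<partial>(lborel \<Otimes>\<^sub>M lborel)) = \<sigma>\<^sup>2 + \<mu>\<^sup>2 - Mm"
proof -
  have e: "(\<lambda>(v, s). pc v s * q s * (v - cond_mean pc s)\<^sup>2) = (\<lambda>x. (\<lambda>(v, s). pc v s * q s * v\<^sup>2) x - 2 * (\<lambda>(v, s). pc v s * q s * (v * cond_mean pc s)) x + (\<lambda>(v, s). pc v s * q s * (cond_mean pc s)\<^sup>2) x)"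
    by (auto simp: fun_eq_iff power2_eq_square algebra_simps)
  show I: "integrable (lborel \<Otimes>\<^sub>M lborel) (\<lambda>(v, s). pc v s * q s * (v - cond_mean pc s)\<^sup>2)"
    unfolding e by (intro Bochner_Integration.integrable_add Bochner_Integration.integrable_diff integrable_mult_right jA jD jE)
  show "(\<integral>(v, s). pc v s * q s * (v - cond_mean pc s)\<^sup>2 \<partial>(lborel \<Otimes>\<^sub>M lborel)) = \<sigma>\<^sup>2 + \<mu>\<^sup>2 - Mm"
    unfolding e
    apply (subst Bochner_Integration.integral_add)
      apply (intro Bochner_Integration.integrable_diff integrable_mult_right jA jE)
     apply (rule jD)
    apply (subst Bochner_Integration.integral_diff)
      apply (intro jA)
     apply (intro integrable_mult_right jE)
    apply (simp only: integral_mult_right_zero jA(2) jD(2) jE(2) Mm_def[symmetric])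
    done
qed

lemma inner_W: "(\<integral>v. pc v s * q s * (v - cond_mean pc s)\<^sup>2 \<partial>lborel) = q s * Wv s"
proof -
  have "(\<integral>v. pc v s * q s * (v - cond_mean pc s)\<^sup>2 \<partial>lborel) = (\<integral>v. q s * ((v - cond_mean pc s)\<^sup>2 * pc v s) \<partial>lborel)"
    by (intro Bochner_Integration.integral_cong) auto
  then show ?thesis unfolding Wv_def by simp
qed

lemma qW: "integrable lborel (\<lambda>s. q s * Wv s)" "(\<integral>s. q s * Wv s \<partial>lborel) = \<sigma>\<^sup>2 + \<mu>\<^sup>2 - Mm"
  using lborel_pair.integrable_snd[OF jV(1)] lborel_pair.integral_snd[OF jV(1)] jV(2)
  unfolding inner_W by auto

lemma AE_W: "AE s in lborel. 0 < q s \<longrightarrow> integrable lborel (\<lambda>v. (v - cond_mean pc s)\<^sup>2 * pc v s)"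
  using lborel_pair.AE_integrable_snd[OF jV(1)]
proof eventually_elim
  case (elim s)
  show ?case
  proof
    assume qp: "0 < q s"
    have "integrable lborel (\<lambda>v. (1 / q s) * (pc v s * q s * (v - cond_mean pc s)\<^sup>2))"
      using elim by (intro integrable_mult_right) simp
    moreover have "\<And>v. (1 / q s) * (pc v s * q s * (v - cond_mean pc s)\<^sup>2) = (v - cond_mean pc s)\<^sup>2 * pc v s"
      using qp by simp
    ultimately show "integrable lborel (\<lambda>v. (v - cond_mean pc s)\<^sup>2 * pc v s)" by simp
  qed
qed


lemma q1: "(\<integral>s. q s \<partial>lborel) = 1" "integrable lborel q"
  using ss unfolding signal_structure_def by blast+

lemma AE_q_lborel:
  assumes "AE s in density lborel q. P s"
  shows "AE s in lborel. 0 < q s \<longrightarrow> P s"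
  using assms by (subst (asm) AE_density) auto

lemma mi_bound:
  assumes jw: "J_well_defined pc q" and c: "0 < c"
  shows "(ln (2 * pi * \<sigma>\<^sup>2) + 1) / 2 - ln (2 * pi * c) / 2 - (\<sigma>\<^sup>2 + \<mu>\<^sup>2 - Mm) / (2 * c) \<le> mutual_info \<mu> \<sigma> pc q"
proof -
  have AE1: "AE s in lborel. 0 < q s \<longrightarrow> integrable lborel (\<lambda>v. pc v s * ln (pc v s))"
    using AE_q_lborel[of "\<lambda>s. integrable lborel (\<lambda>v. v * pc v s) \<and> integrable lborel (\<lambda>v. pc v s * ln (pc v s))"]
      jw unfolding J_well_defined_def by (auto elim: AE_mp)
  have iH: "integrable lborel (\<lambda>s. q s * diff_entropy (\<lambda>v. pc v s))"
    using jw unfolding J_well_defined_def by blast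
  have iR: "integrable lborel (\<lambda>s. ln (2 * pi * c) / 2 * q s + (1 / (2 * c)) * (q s * Wv s))"
    using q1(2) qW(1) by (intro Bochner_Integration.integrable_add integrable_mult_right)
  have "(\<integral>s. q s * diff_entropy (\<lambda>v. pc v s) \<partial>lborel) \<le> (\<integral>s. ln (2 * pi * c) / 2 * q s + (1 / (2 * c)) * (q s * Wv s) \<partial>lborel)"
    using iH iR
  proof (rule integral_mono_AE)
    show "AE s in lborel. q s * diff_entropy (\<lambda>v. pc v s) \<le> ln (2 * pi * c) / 2 * q s + 1 / (2 * c) * (q s * Wv s)"
      using AE1 AE_W
    proof eventually_elim
      case (elim s)
      show ?case
      proof (cases "0 < q s")
        case False
        then have "q s = 0" using qnn[of s] by simp
        then show ?thesis by simp
      next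
        case True
        have "diff_entropy (\<lambda>v. pc v s) \<le> ln (2 * pi * c) / 2 + Wv s / (2 * c)"
          unfolding diff_entropy_def Wv_def
          by (rule gibbs[OF pci pcnn pc1]) (use elim True c in auto)
        then have "q s * diff_entropy (\<lambda>v. pc v s) \<le> q s * (ln (2 * pi * c) / 2 + Wv s / (2 * c))"
          using True by (intro mult_left_mono) auto
        then show ?thesis by (simp add: algebra_simps)
      qed
    qed
  qed
  also have "\<dots> = ln (2 * pi * c) / 2 + (\<sigma>\<^sup>2 + \<mu>\<^sup>2 - Mm) / (2 * c)"
    using q1 qW iR by simp
  finally show ?thesis
    unfolding mutual_info_def normal_entropy(2)[OF sp] by simp
qed


lemma dq_prob: "prob_space (density lborel q)"
proof
  have "emeasure (density lborel q) (space (density lborel q)) = (\<integral>\<^sup>+ s. ennreal (q s) \<partial>lborel)"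
    by (simp add: emeasure_density)
  also have "\<dots> = ennreal (\<integral>s. q s \<partial>lborel)"
    using q1(2) by (rule nn_integral_eq_integral) (simp add: qnn)
  finally show "emeasure (density lborel q) (space (density lborel q)) = 1" using q1(1) by simp
qed

lemma mm_dq: "cond_mean pc \<in> measurable (density lborel q) lborel"
  using mm by simp

lemma law_prob: "prob_space (law_cond_mean pc q)"
  unfolding law_cond_mean_def by (rule prob_space.prob_space_distr[OF dq_prob mm_dq])

lemma law_sets: "sets (law_cond_mean pc q) = sets lborel"
  unfolding law_cond_mean_def by simp

lemma law_integrable:
  fixes g :: "real \<Rightarrow> real"
  assumes [measurable]: "g \<in> borel_measurable lborel"
  shows "integrable (law_cond_mean pc q) g \<longleftrightarrow> integrable lborel (\<lambda>s. q s * g (cond_mean pc s))"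
  unfolding law_cond_mean_def
  by (subst integrable_distr_eq[OF mm_dq assms], subst integrable_density) (auto simp: qnn)

lemma law_integral:
  fixes g :: "real \<Rightarrow> real"
  assumes [measurable]: "g \<in> borel_measurable lborel"
  shows "(\<integral>x. g x \<partial>law_cond_mean pc q) = (\<integral>s. q s * g (cond_mean pc s) \<partial>lborel)"
  unfolding law_cond_mean_def
  by (subst integral_distr[OF mm_dq assms], subst integral_density) (auto simp: qnn)

lemma qm_int: "integrable lborel (\<lambda>s. q s * cond_mean pc s)"
  using lborel_pair.integrable_snd[OF jC(1)] inner_m[of _ 1] by simp

lemma law_moments:
  "integrable (law_cond_mean pc q) (\<lambda>x. x)" "(\<integral>x. x \<partial>law_cond_mean pc q) = \<mu>"
  "integrable (law_cond_mean pc q) (\<lambda>x. x\<^sup>2)" "(\<integral>x. x\<^sup>2 \<partial>law_cond_mean pc q) = Mm"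
proof -
  show "integrable (law_cond_mean pc q) (\<lambda>x. x)"
    by (subst law_integrable) (simp_all add: qm_int)
  show "(\<integral>x. x \<partial>law_cond_mean pc q) = \<mu>"
    by (subst law_integral) (simp_all add: mean_m)
  show "integrable (law_cond_mean pc q) (\<lambda>x. x\<^sup>2)"
    by (subst law_integrable) (simp_all add: im2 mult.commute[of "q _"])
  show "(\<integral>x. x\<^sup>2 \<partial>law_cond_mean pc q) = Mm"
    by (subst law_integral) (simp_all add: Mm_def)
qed


lemma W2_lower:
  assumes a: "0 < a" and t: "0 < t"
  shows "Mm + a\<^sup>2 - t * (Mm - \<mu>\<^sup>2) - a\<^sup>2 / t \<le> enn2real (W2sq (law_cond_mean pc q) (density lborel (normal_density 0 a)))"
proof -
  let ?P1 = "law_cond_mean pc q" and ?P2 = "density lborel (normal_density 0 a)"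
  let ?g1 = "\<lambda>x::real. (1 - t) * x\<^sup>2 + (2 * t * \<mu>) * x + (- t * \<mu>\<^sup>2)"
  let ?g2 = "\<lambda>y::real. (1 - 1 / t) * y\<^sup>2 + (- 2 * \<mu>) * y + 0"
  note N = noise_facts[OF a]
  have ig1: "integrable ?P1 ?g1" and Ig1: "(\<integral>x. ?g1 x \<partial>?P1) = Mm - t * (Mm - \<mu>\<^sup>2)"
    using quad_moments[OF law_prob law_moments(1,3), of "1 - t" "2 * t * \<mu>" "- t * \<mu>\<^sup>2"] law_moments(2,4)
    by (auto simp: algebra_simps power2_eq_square)
  have ig2: "integrable ?P2 ?g2" and Ig2: "(\<integral>y. ?g2 y \<partial>?P2) = a\<^sup>2 - a\<^sup>2 / t"
    using quad_moments[OF N(1) N(3) N(5), of "1 - 1 / t" "- 2 * \<mu>" 0] N(4,6)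
    by (auto simp: algebra_simps)
  have le: "?g1 x + ?g2 y \<le> (x - y)\<^sup>2" for x y :: real
  proof -
    have "(x - y)\<^sup>2 - (?g1 x + ?g2 y) = (t * (x - \<mu>) - y)\<^sup>2 / t"
      using t by (simp add: field_simps power2_eq_square)
    moreover have "0 \<le> (t * (x - \<mu>) - y)\<^sup>2 / t" using t by simp
    ultimately show ?thesis by linarith
  qed
  have lowb: "ennreal (Mm + a\<^sup>2 - t * (Mm - \<mu>\<^sup>2) - a\<^sup>2 / t) \<le> W2sq ?P1 ?P2"
    unfolding W2sq_def
  proof (rule INF_greatest, clarify)
    fix \<pi> :: "(real \<times> real) measure"
    assume H: "prob_space \<pi>" "sets \<pi> = sets (lborel \<Otimes>\<^sub>M lborel)" "distr \<pi> lborel fst = ?P1" "distr \<pi> lborel snd = ?P2"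
    have "(\<integral>x. ?g1 x \<partial>?P1) + (\<integral>y. ?g2 y \<partial>?P2) = Mm + a\<^sup>2 - t * (Mm - \<mu>\<^sup>2) - a\<^sup>2 / t"
      unfolding Ig1 Ig2 by simp
    with coupling_lower[OF H(2-4) _ _ ig1 ig2 law_moments(3) N(5) le]
    show "ennreal (Mm + a\<^sup>2 - t * (Mm - \<mu>\<^sup>2) - a\<^sup>2 / t) \<le> (\<integral>\<^sup>+ xy. ennreal ((fst xy - snd xy)\<^sup>2) \<partial>\<pi>)"
      by simp
  qed
  have fin: "W2sq ?P1 ?P2 < \<infinity>"
    by (rule W2_finite[OF law_prob N(1) law_sets N(2) law_moments(3) N(5)])
  show ?thesis
  proof (cases "0 \<le> Mm + a\<^sup>2 - t * (Mm - \<mu>\<^sup>2) - a\<^sup>2 / t")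
    case True
    have "ennreal (Mm + a\<^sup>2 - t * (Mm - \<mu>\<^sup>2) - a\<^sup>2 / t) \<le> ennreal (enn2real (W2sq ?P1 ?P2))"
      using lowb fin by (simp add: ennreal_enn2real less_top)
    then show ?thesis using True by (simp add: ennreal_le_iff)
  next
    case False
    then show ?thesis using enn2real_nonneg[of "W2sq ?P1 ?P2"] by linarith
  qed
qed


lemma J_bound:
  assumes jw: "J_well_defined pc q" and sZ: "0 < \<sigma>Z" and T: "0 < T" and t: "0 < t" and c: "0 < c" and lam: "0 \<le> lam"
  shows "J_obj lam \<sigma>Z T \<mu> \<sigma> pc q \<le>
     1/2 * (t * (Mm - \<mu>\<^sup>2) + (\<sigma>Z * sqrt T)\<^sup>2 / t)
     - lam * ((ln (2 * pi * \<sigma>\<^sup>2) + 1) / 2 - ln (2 * pi * c) / 2 - (\<sigma>\<^sup>2 + \<mu>\<^sup>2 - Mm) / (2 * c))"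
proof -
  let ?a = "\<sigma>Z * sqrt T"
  have a: "0 < ?a" using sZ T by simp
  have a2: "?a\<^sup>2 = \<sigma>Z\<^sup>2 * T" using T by (simp add: power_mult_distrib)
  have W: "Mm + ?a\<^sup>2 - t * (Mm - \<mu>\<^sup>2) - ?a\<^sup>2 / t \<le> enn2real (W2sq (law_cond_mean pc q) (noise_law \<sigma>Z T))"
    using W2_lower[OF a t] unfolding noise_law_def .
  have M: "(\<integral>s. (cond_mean pc s)\<^sup>2 * q s \<partial>lborel) = Mm"
    unfolding Mm_def by (simp add: mult.commute)
  have I: "(ln (2 * pi * \<sigma>\<^sup>2) + 1) / 2 - ln (2 * pi * c) / 2 - (\<sigma>\<^sup>2 + \<mu>\<^sup>2 - Mm) / (2 * c) \<le> mutual_info \<mu> \<sigma> pc q"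
    by (rule mi_bound[OF jw c])
  have I2: "lam * ((ln (2 * pi * \<sigma>\<^sup>2) + 1) / 2 - ln (2 * pi * c) / 2 - (\<sigma>\<^sup>2 + \<mu>\<^sup>2 - Mm) / (2 * c)) \<le> lam * mutual_info \<mu> \<sigma> pc q"
    using I lam by (rule mult_left_mono)
  show ?thesis
    unfolding J_obj_def M by (rule lin_aux[OF W a2 I2])
qed

end


lemma normal_quad:
  assumes s: "0 < s"
  shows "integrable lborel (\<lambda>x. normal_density m s x * (A * x\<^sup>2 + B * x + C))"
    "(\<integral>x. normal_density m s x * (A * x\<^sup>2 + B * x + C) \<partial>lborel) = A * (s\<^sup>2 + m\<^sup>2) + B * m + C"
proof -
  have e: "(\<lambda>x. normal_density m s x * (A * x\<^sup>2 + B * x + C)) =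
     (\<lambda>x. A * (normal_density m s x * x\<^sup>2) + B * (normal_density m s x * x) + C * normal_density m s x)"
    by (auto simp: fun_eq_iff algebra_simps)
  have i1: "integrable lborel (\<lambda>x. normal_density m s x * x\<^sup>2)" by (rule normal_x2(1)[OF s])
  have i2: "integrable lborel (\<lambda>x. normal_density m s x * x)" by (rule integrable_normal_moment_nz_1[OF s])
  have i3: "integrable lborel (normal_density m s)" by (rule integrable_normal_density[OF s])
  show "integrable lborel (\<lambda>x. normal_density m s x * (A * x\<^sup>2 + B * x + C))"
    unfolding e by (intro Bochner_Integration.integrable_add integrable_mult_right i1 i2 i3)
  show "(\<integral>x. normal_density m s x * (A * x\<^sup>2 + B * x + C) \<partial>lborel) = A * (s\<^sup>2 + m\<^sup>2) + B * m + C"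
    unfolding e using i1 i2 i3 normal_x2(2)[OF s] integral_normal_moment_nz_1[OF s] integral_normal_density[OF s]
    by simp
qed

context
  fixes \<mu> \<sigma> y :: real
  assumes y0: "0 < y" and ys: "y < \<sigma>"
begin

definition "c0 = \<sigma>\<^sup>2 - y\<^sup>2"
definition "Sd = \<sigma>\<^sup>2 / y"
definition "rho = y\<^sup>2 / \<sigma>\<^sup>2"
definition "ee = \<sigma> * sqrt c0 / y"
definition "pcC v s = normal_density (\<mu> + rho * (s - \<mu>)) (sqrt c0) v"
definition "qC = normal_density \<mu> Sd"

lemma sp': "0 < \<sigma>" using y0 ys by simp
lemma c0p: "0 < c0" unfolding c0_def using y0 ys by (simp add: power_strict_mono)
lemma Sdp: "0 < Sd" unfolding Sd_def using sp' y0 by simp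
lemma eep: "0 < ee" unfolding ee_def using sp' y0 c0p by simp
lemma rhop: "0 < rho" unfolding rho_def using sp' y0 by simp
lemma ee2: "ee\<^sup>2 = \<sigma>\<^sup>2 * c0 / y\<^sup>2"
  unfolding ee_def using c0p by (simp add: power_mult_distrib power_divide)
lemma Sd2: "Sd\<^sup>2 = \<sigma>\<^sup>2 * \<sigma>\<^sup>2 / y\<^sup>2"
  unfolding Sd_def by (simp add: power_divide power2_eq_square)
lemma rhoSd: "rho * Sd = y"
  unfolding rho_def Sd_def using y0 sp' by (simp add: power2_eq_square field_simps)

lemma expo:
  "(u - rho * w)\<^sup>2 / (2 * c0) + w\<^sup>2 / (2 * Sd\<^sup>2) = u\<^sup>2 / (2 * \<sigma>\<^sup>2) + (w - u)\<^sup>2 / (2 * ee\<^sup>2)"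
proof -
  have s: "\<sigma> \<noteq> 0" using sp' by simp
  have yy: "y \<noteq> 0" using y0 by simp
  have c: "c0 \<noteq> 0" using c0p by simp
  have cc: "c0 = \<sigma>\<^sup>2 - y\<^sup>2" by (simp add: c0_def)
  show ?thesis
    unfolding ee2 Sd2 rho_def using s yy c
    by (simp add: field_simps power2_eq_square cc)
qed

lemma ident: "pcC v s * qC s = normal_density \<mu> \<sigma> v * normal_density 0 ee (s - v)"
proof -
  have pre: "sqrt (2 * pi * (sqrt c0)\<^sup>2) * sqrt (2 * pi * Sd\<^sup>2) = sqrt (2 * pi * \<sigma>\<^sup>2) * sqrt (2 * pi * ee\<^sup>2)"
  proof -
    have "(2 * pi * c0) * (2 * pi * Sd\<^sup>2) = (2 * pi * \<sigma>\<^sup>2) * (2 * pi * ee\<^sup>2)"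
      unfolding ee2 Sd2 using y0 by (simp add: field_simps power2_eq_square)
    then show ?thesis using c0p by (simp add: real_sqrt_mult[symmetric])
  qed
  have ex: "(v - (\<mu> + rho * (s - \<mu>)))\<^sup>2 / (2 * (sqrt c0)\<^sup>2) + (s - \<mu>)\<^sup>2 / (2 * Sd\<^sup>2)
      = (v - \<mu>)\<^sup>2 / (2 * \<sigma>\<^sup>2) + (s - v - 0)\<^sup>2 / (2 * ee\<^sup>2)"
    using expo[of "v - \<mu>" "s - \<mu>"] c0p by (simp add: algebra_simps)
  have "pcC v s * qC s = 1 / (sqrt (2 * pi * (sqrt c0)\<^sup>2) * sqrt (2 * pi * Sd\<^sup>2)) *
      exp (- ((v - (\<mu> + rho * (s - \<mu>)))\<^sup>2 / (2 * (sqrt c0)\<^sup>2) + (s - \<mu>)\<^sup>2 / (2 * Sd\<^sup>2)))"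
    unfolding pcC_def qC_def normal_density_def by (simp add: exp_add[symmetric] exp_diff)
  also have "\<dots> = 1 / (sqrt (2 * pi * \<sigma>\<^sup>2) * sqrt (2 * pi * ee\<^sup>2)) *
      exp (- ((v - \<mu>)\<^sup>2 / (2 * \<sigma>\<^sup>2) + (s - v - 0)\<^sup>2 / (2 * ee\<^sup>2)))"
    unfolding pre ex ..
  also have "\<dots> = normal_density \<mu> \<sigma> v * normal_density 0 ee (s - v)"
    unfolding normal_density_def by (simp add: exp_add[symmetric] exp_diff)
  finally show ?thesis .
qed


lemma sc0: "0 < sqrt c0" using c0p by simp

lemma cmC: "cond_mean pcC s = \<mu> + rho * (s - \<mu>)"
proof -
  have "cond_mean pcC s = (\<integral>v. normal_density (\<mu> + rho * (s - \<mu>)) (sqrt c0) v * v \<partial>lborel)"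
    unfolding cond_mean_def pcC_def by (simp add: mult.commute)
  also have "\<dots> = \<mu> + rho * (s - \<mu>)" by (rule integral_normal_moment_nz_1[OF sc0])
  finally show ?thesis .
qed

lemma cmC_fun: "cond_mean pcC = (\<lambda>s. \<mu> + rho * (s - \<mu>))"
  using cmC by auto

lemma ssC: "signal_structure \<mu> \<sigma> pcC qC"
  unfolding signal_structure_def
proof (intro conjI allI)
  show "qC \<in> borel_measurable lborel" by (simp add: qC_def)
  show "0 \<le> qC s" for s by (simp add: qC_def)
  show "integrable lborel qC" by (simp add: qC_def integrable_normal_density[OF Sdp])
  show "(\<integral>s. qC s \<partial>lborel) = 1" by (simp add: qC_def integral_normal_density[OF Sdp])
  show "(\<lambda>(v, s). pcC v s) \<in> borel_measurable (lborel \<Otimes>\<^sub>M lborel)"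
    unfolding pcC_def normal_density_def by measurable
  show "0 \<le> pcC v s" for v s by (simp add: pcC_def)
  show "integrable lborel (\<lambda>v. pcC v s)" for s
    unfolding pcC_def using integrable_normal_density[OF sc0] by simp
  show "(\<integral>v. pcC v s \<partial>lborel) = 1" for s
    unfolding pcC_def using integral_normal_density[OF sc0] by simp
  fix v
  have e: "(\<lambda>s. pcC v s * qC s) = (\<lambda>s. normal_density \<mu> \<sigma> v * normal_density v ee s)"
    unfolding ident by (auto simp: normal_density_def fun_eq_iff power2_commute)
  show "integrable lborel (\<lambda>s. pcC v s * qC s)"
    unfolding e using integrable_normal_density[OF eep] by simp
  show "(\<integral>s. pcC v s * qC s \<partial>lborel) = normal_density \<mu> \<sigma> v"
    unfolding e using integral_normal_density[OF eep] by simp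
qed

lemma entC: "diff_entropy (\<lambda>v. pcC v s) = (ln (2 * pi * c0) + 1) / 2"
  unfolding pcC_def using normal_entropy(2)[OF sc0] c0p by simp

lemma m2C: "integrable lborel (\<lambda>s. (cond_mean pcC s)\<^sup>2 * qC s)"
    "(\<integral>s. (cond_mean pcC s)\<^sup>2 * qC s \<partial>lborel) = \<mu>\<^sup>2 + y\<^sup>2"
proof -
  have e: "(\<lambda>s. (cond_mean pcC s)\<^sup>2 * qC s) = (\<lambda>s. normal_density \<mu> Sd s * (rho\<^sup>2 * s\<^sup>2 + (2 * rho * (1 - rho) * \<mu>) * s + (1 - rho)\<^sup>2 * \<mu>\<^sup>2))"
    unfolding cmC_fun qC_def by (auto simp: fun_eq_iff power2_eq_square algebra_simps)
  show "integrable lborel (\<lambda>s. (cond_mean pcC s)\<^sup>2 * qC s)"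
    unfolding e by (rule normal_quad(1)[OF Sdp])
  have "rho\<^sup>2 * Sd\<^sup>2 = y\<^sup>2" using rhoSd by (metis power_mult_distrib)
  then show "(\<integral>s. (cond_mean pcC s)\<^sup>2 * qC s \<partial>lborel) = \<mu>\<^sup>2 + y\<^sup>2"
    unfolding e normal_quad(2)[OF Sdp] by (simp add: power2_eq_square algebra_simps)
qed

lemma jwC: "J_well_defined pcC qC"
  unfolding J_well_defined_def
proof (intro conjI)
  show "AE s in density lborel qC. integrable lborel (\<lambda>v. v * pcC v s) \<and> integrable lborel (\<lambda>v. pcC v s * ln (pcC v s))"
  proof (intro AE_I2 conjI)
    fix s
    show "integrable lborel (\<lambda>v. v * pcC v s)"
      unfolding pcC_def using integrable_normal_moment_nz_1[OF sc0] by (simp add: mult.commute)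
    show "integrable lborel (\<lambda>v. pcC v s * ln (pcC v s))"
      unfolding pcC_def using normal_entropy(1)[OF sc0] by simp
  qed
  show "integrable lborel (\<lambda>s. qC s * diff_entropy (\<lambda>v. pcC v s))"
    unfolding entC using ssC unfolding signal_structure_def by (intro integrable_mult_left) blast
  show "integrable lborel (\<lambda>s. (cond_mean pcC s)\<^sup>2 * qC s)" by (rule m2C(1))
qed

lemma admC: "admissible \<mu> \<sigma> pcC qC"
  unfolding admissible_def
proof (intro conjI ssC jwC AE_I2)
  fix s
  have d: "((\<lambda>s. \<mu> + rho * (s - \<mu>)) has_real_derivative rho) (at s)"
    by (auto intro!: derivative_eq_intros)
  show "cond_mean pcC differentiable at s"
    unfolding cmC_fun by (intro derivative_intros)
  show "deriv (cond_mean pcC) s \<noteq> 0"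
    unfolding cmC_fun using DERIV_imp_deriv[OF d] rhop by simp
qed


lemma affine_law:
  fixes N :: "real measure" and m s \<alpha> \<beta> :: real
  assumes s: "0 < s" and al: "\<alpha> \<noteq> 0" and N: "N = density lborel (normal_density m s)"
  shows "distr N lborel (\<lambda>x. \<beta> + \<alpha> * x) = density lborel (normal_density (\<beta> + \<alpha> * m) (\<bar>\<alpha>\<bar> * s))"
proof -
  interpret prob_space N using prob_space_normal_density[OF s] N by simp
  have D: "distributed N lborel (\<lambda>x. x) (normal_density m s)"
    unfolding distributed_def using distr_id2[of lborel N] N by simp
  from normal_density_affine[OF D s al, of \<beta>] show ?thesis
    unfolding distributed_def by simp
qed

lemma lawC: "law_cond_mean pcC qC = density lborel (normal_density \<mu> y)"
proof -
  have f: "cond_mean pcC = (\<lambda>x. (\<mu> - rho * \<mu>) + rho * x)"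
    unfolding cmC_fun by (auto simp: fun_eq_iff algebra_simps)
  have "law_cond_mean pcC qC = density lborel (normal_density ((\<mu> - rho * \<mu>) + rho * \<mu>) (\<bar>rho\<bar> * Sd))"
    unfolding law_cond_mean_def f
    by (rule affine_law[OF Sdp]) (use rhop in \<open>auto simp: qC_def\<close>)
  then show ?thesis using rhop rhoSd by simp
qed

lemma W2C:
  assumes a: "0 < a"
  shows "W2sq (law_cond_mean pcC qC) (density lborel (normal_density 0 a)) \<le> ennreal (\<mu>\<^sup>2 + (y - a)\<^sup>2)"
proof -
  let ?N = "density lborel std_normal_density"
  let ?f = "\<lambda>x::real. (\<mu> + y * x, a * x)"
  let ?\<pi> = "distr ?N (lborel \<Otimes>\<^sub>M lborel) ?f"
  have one: "(0::real) < 1" by simp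
  have fm: "?f \<in> measurable ?N (lborel \<Otimes>\<^sub>M lborel)" by simp
  have d1: "distr ?\<pi> lborel fst = law_cond_mean pcC qC"
  proof -
    have "distr ?\<pi> lborel fst = distr ?N lborel (\<lambda>x. \<mu> + y * x)"
      by (subst distr_distr) (simp_all add: comp_def)
    also have "\<dots> = density lborel (normal_density \<mu> y)"
      using affine_law[OF one, of y ?N 0 \<mu>] y0 by simp
    finally show ?thesis using lawC by simp
  qed
  have d2: "distr ?\<pi> lborel snd = density lborel (normal_density 0 a)"
  proof -
    have "distr ?\<pi> lborel snd = distr ?N lborel (\<lambda>x. 0 + a * x)"
      by (subst distr_distr) (simp_all add: comp_def)
    also have "\<dots> = density lborel (normal_density 0 a)"
      using affine_law[OF one, of a ?N 0 0] a by simp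
    finally show ?thesis .
  qed
  have ps: "prob_space ?\<pi>"
    by (rule prob_space.prob_space_distr[OF prob_space_normal_density[OF one] fm])
  have "W2sq (law_cond_mean pcC qC) (density lborel (normal_density 0 a)) \<le> (\<integral>\<^sup>+ xy. ennreal ((fst xy - snd xy)\<^sup>2) \<partial>?\<pi>)"
    unfolding W2sq_def by (rule INF_lower) (use ps d1 d2 in simp)
  also have "\<dots> = (\<integral>\<^sup>+ x. ennreal ((\<mu> + y * x - a * x)\<^sup>2) \<partial>?N)"
    by (subst nn_integral_distr) simp_all
  also have "\<dots> = (\<integral>\<^sup>+ x. ennreal (std_normal_density x) * ennreal ((\<mu> + y * x - a * x)\<^sup>2) \<partial>lborel)"
    by (subst nn_integral_density) simp_all
  also have "\<dots> = (\<integral>\<^sup>+ x. ennreal (std_normal_density x * ((y - a)\<^sup>2 * x\<^sup>2 + (2 * \<mu> * (y - a)) * x + \<mu>\<^sup>2)) \<partial>lborel)"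
  proof (intro nn_integral_cong)
    fix x :: real
    have "std_normal_density x * (\<mu> + y * x - a * x)\<^sup>2 = std_normal_density x * ((y - a)\<^sup>2 * x\<^sup>2 + (2 * \<mu> * (y - a)) * x + \<mu>\<^sup>2)"
      by (simp add: power2_eq_square algebra_simps)
    then show "ennreal (std_normal_density x) * ennreal ((\<mu> + y * x - a * x)\<^sup>2) = ennreal (std_normal_density x * ((y - a)\<^sup>2 * x\<^sup>2 + (2 * \<mu> * (y - a)) * x + \<mu>\<^sup>2))"
      by (metis ennreal_mult' normal_density_nonneg)
  qed
  also have "\<dots> = ennreal (\<integral>x. std_normal_density x * ((y - a)\<^sup>2 * x\<^sup>2 + (2 * \<mu> * (y - a)) * x + \<mu>\<^sup>2) \<partial>lborel)"
  proof (rule nn_integral_eq_integral[OF normal_quad(1)[OF one]])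
    show "AE x in lborel. 0 \<le> std_normal_density x * ((y - a)\<^sup>2 * x\<^sup>2 + 2 * \<mu> * (y - a) * x + \<mu>\<^sup>2)"
    proof (intro AE_I2 mult_nonneg_nonneg)
      fix x :: real
      have "(y - a)\<^sup>2 * x\<^sup>2 + 2 * \<mu> * (y - a) * x + \<mu>\<^sup>2 = ((y - a) * x + \<mu>)\<^sup>2"
        by (simp add: power2_eq_square algebra_simps)
      then show "0 \<le> (y - a)\<^sup>2 * x\<^sup>2 + 2 * \<mu> * (y - a) * x + \<mu>\<^sup>2" by simp
    qed simp
  qed
  also have "\<dots> = ennreal (\<mu>\<^sup>2 + (y - a)\<^sup>2)"
    unfolding normal_quad(2)[OF one] by simp
  finally show ?thesis .
qed

lemma miC: "mutual_info \<mu> \<sigma> pcC qC = ln (2 * pi * \<sigma>\<^sup>2) / 2 - ln (2 * pi * c0) / 2"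
proof -
  have "(\<integral>s. qC s * diff_entropy (\<lambda>v. pcC v s) \<partial>lborel) = (ln (2 * pi * c0) + 1) / 2"
    unfolding entC qC_def using integral_normal_density[OF Sdp] by simp
  then show ?thesis
    unfolding mutual_info_def normal_entropy(2)[OF sp'] by (simp add: field_simps)
qed

lemma JC:
  assumes sZ: "0 < \<sigma>Z" and T: "0 < T"
  shows "(\<sigma>Z * sqrt T) * y - lam * (ln (2 * pi * \<sigma>\<^sup>2) / 2 - ln (2 * pi * c0) / 2) \<le> J_obj lam \<sigma>Z T \<mu> \<sigma> pcC qC"
proof -
  let ?a = "\<sigma>Z * sqrt T"
  have a: "0 < ?a" using sZ T by simp
  have a2: "\<sigma>Z\<^sup>2 * T = ?a\<^sup>2" using T by (simp add: power_mult_distrib)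
  have W: "enn2real (W2sq (law_cond_mean pcC qC) (noise_law \<sigma>Z T)) \<le> \<mu>\<^sup>2 + (y - ?a)\<^sup>2"
    unfolding noise_law_def by (rule enn2real_leI[OF _ W2C[OF a]]) simp
  show ?thesis
    unfolding J_obj_def m2C(2) miC a2 using W by (simp add: power2_eq_square algebra_simps)
qed

end


lemma final_alg:
  fixes a y c0 \<sigma> \<mu> lam M L1 L2 :: real
  assumes a: "0 < a" and y: "0 < y" and c: "0 < c0" and key: "a * c0 = lam * y"
    and cdef: "c0 = \<sigma>\<^sup>2 - y\<^sup>2"
  shows "1/2 * ((a / y) * (M - \<mu>\<^sup>2) + a\<^sup>2 / (a / y)) - lam * ((L1 + 1) / 2 - L2 / 2 - (\<sigma>\<^sup>2 + \<mu>\<^sup>2 - M) / (2 * c0))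
     = a * y - lam * (L1 / 2 - L2 / 2)"
proof -
  have lam: "lam = a * c0 / y" using key y by (simp add: field_simps)
  have c': "0 < \<sigma>\<^sup>2 - y\<^sup>2" using c cdef by simp
  show ?thesis unfolding lam cdef using a y c' by (simp add: field_simps power2_eq_square)
qed

theorem proposition4:
  fixes \<mu>v \<sigma>v lam \<sigma>Z T :: real
  assumes "\<sigma>v > 0" and "lam > 0" and "\<sigma>Z > 0" and "T > 0"
  shows "\<exists>\<sigma>\<epsilon> > 0. \<exists>pc q.
           admissible \<mu>v \<sigma>v pc q \<and>
           (\<forall>v s. pc v s * q s = normal_density \<mu>v \<sigma>v v * normal_density 0 \<sigma>\<epsilon> (s - v)) \<and>
           (\<forall>pc' q'. admissible \<mu>v \<sigma>v pc' q' \<longrightarrow>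
              J_obj lam \<sigma>Z T \<mu>v \<sigma>v pc' q' \<le> J_obj lam \<sigma>Z T \<mu>v \<sigma>v pc q)"
proof -
  note sp = assms(1) and lp = assms(2) and sZ = assms(3) and Tp = assms(4)
  define a where "a = \<sigma>Z * sqrt T"
  have a: "0 < a" unfolding a_def using sZ Tp by simp
  define D where "D = sqrt (lam\<^sup>2 + 4 * a\<^sup>2 * \<sigma>v\<^sup>2)"
  define y where "y = (D - lam) / (2 * a)"
  have D2: "D\<^sup>2 = lam\<^sup>2 + 4 * a\<^sup>2 * \<sigma>v\<^sup>2" unfolding D_def by simp
  have D0: "0 \<le> D" unfolding D_def by simp
  have Dl: "lam < D"
  proof -
    have "lam\<^sup>2 < D\<^sup>2" unfolding D2 using a sp by simp
    then show ?thesis using D0 by (rule power_less_imp_less_base)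
  qed
  have Du: "D < 2 * a * \<sigma>v + lam"
  proof -
    have "D\<^sup>2 < (2 * a * \<sigma>v + lam)\<^sup>2" unfolding D2 using a sp lp by (simp add: power2_eq_square algebra_simps)
    moreover have "0 \<le> 2 * a * \<sigma>v + lam" using a sp lp by simp
    ultimately show ?thesis by (rule power_less_imp_less_base)
  qed
  have y0: "0 < y" unfolding y_def using Dl a by simp
  have ys: "y < \<sigma>v" unfolding y_def using Du a by (simp add: field_simps)
  have ay: "2 * a * y = D - lam" unfolding y_def using a by simp
  have key0: "a * (\<sigma>v\<^sup>2 - y\<^sup>2) = lam * y"
  proof -
    have "(2 * a * y + lam)\<^sup>2 = lam\<^sup>2 + 4 * a\<^sup>2 * \<sigma>v\<^sup>2" unfolding ay using D2 by simp
    then have "4 * a * (a * y\<^sup>2 + lam * y - a * \<sigma>v\<^sup>2) = 0" by (simp add: power2_eq_square algebra_simps)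
    then have h: "a * y\<^sup>2 + lam * y - a * \<sigma>v\<^sup>2 = 0" using a by simp
    then show ?thesis unfolding right_diff_distrib by linarith
  qed
  have c0d: "c0 \<sigma>v y = \<sigma>v\<^sup>2 - y\<^sup>2" by (rule c0_def[OF y0 ys])
  have c0p: "0 < c0 \<sigma>v y" by (rule c0p[OF y0 ys])
  have key: "a * c0 \<sigma>v y = lam * y" using key0 c0d by simp
  let ?pc = "pcC \<mu>v \<sigma>v y" and ?q = "qC \<mu>v \<sigma>v y"
  show ?thesis
  proof (rule exI[of _ "ee \<sigma>v y"], intro conjI exI[of _ ?pc] exI[of _ ?q] allI impI)
    show "0 < ee \<sigma>v y" by (rule eep[OF y0 ys])
    show "admissible \<mu>v \<sigma>v ?pc ?q" by (rule admC[OF y0 ys])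
    show "?pc v s * ?q s = normal_density \<mu>v \<sigma>v v * normal_density 0 (ee \<sigma>v y) (s - v)" for v s
      by (rule ident[OF y0 ys])
    fix pc' q' assume adm: "admissible \<mu>v \<sigma>v pc' q'"
    have ss': "signal_structure \<mu>v \<sigma>v pc' q'" and jw': "J_well_defined pc' q'"
      using adm unfolding admissible_def by auto
    have im2': "integrable lborel (\<lambda>s. (cond_mean pc' s)\<^sup>2 * q' s)"
      using jw' unfolding J_well_defined_def by blast
    have t: "0 < a / y" using a y0 by simp
    have "J_obj lam \<sigma>Z T \<mu>v \<sigma>v pc' q' \<le>
      1/2 * ((a / y) * (Mm pc' q' - \<mu>v\<^sup>2) + a\<^sup>2 / (a / y))
      - lam * ((ln (2 * pi * \<sigma>v\<^sup>2) + 1) / 2 - ln (2 * pi * c0 \<sigma>v y) / 2 - (\<sigma>v\<^sup>2 + \<mu>v\<^sup>2 - Mm pc' q') / (2 * c0 \<sigma>v y))"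
      using J_bound[OF ss' sp im2' jw' sZ Tp t c0p] lp unfolding a_def by simp
    also have "\<dots> = a * y - lam * (ln (2 * pi * \<sigma>v\<^sup>2) / 2 - ln (2 * pi * c0 \<sigma>v y) / 2)"
      by (rule final_alg[OF a y0 c0p key c0d])
    also have "\<dots> \<le> J_obj lam \<sigma>Z T \<mu>v \<sigma>v ?pc ?q"
      using JC[OF y0 ys sZ Tp, of lam \<mu>v] unfolding a_def .
    finally show "J_obj lam \<sigma>Z T \<mu>v \<sigma>v pc' q' \<le> J_obj lam \<sigma>Z T \<mu>v \<sigma>v ?pc ?q" .
  qed
qed

end
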